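(* Let $R$ be an environment with a single door pixel $s$, and let $A=|R|$. Run the Depth-First Leader-Follower (DFLF) strategy defined in the context until all of $R$ is filled. Then each robot makes at most $A$ moves. Consequently, the total number of moves made by all robots is at most $A^2$.
   Context: Pixels are the unit squares of the integer grid, identified with their lower-left corners $(i,j)\in\mathbb{Z}^2$. Two pixels are neighbors if they share an edge, so $(i,j)$ has the four neighbors $(i\pm1,j)$ and $(i,j\pm1)$. The environment $R$ is a finite set of pixels that is connected under this neighbor relation. It contains a single distinguished door pixel $s\in R$. Time is discrete, $t=0,1,2,\dots$. At each time, every pixel of $R$ holds at most one robot. $p(r,t)$ denotes the pixel occupied by robot $r$ at time $t$, and $\mathrm{prev}(r,t)=p(r,t-1)$. In one time step a robot either stays where it is or moves to a neighboring pixel of $R$ that is unoccupied. Vacating rule: if a robot occupies pixel $q$ at time $t$ and a different pixel at time $t+1$, then no robot occupies $q$ at time $t+1$; so the earliest a vacated pixel can be re-entered is time $t+2$. At time $0$ exactly one robot is present, on $s$. Door rule: whenever the robot on $s$ leaves, a new robot appears on $s$ as soon as the vacating rule allows. A pixel of $R$ is a frontier pixel at time $t$ if no robot has occupied it at any time $\le t$. The DFLF strategy works as follows. - Each robot is either moving or stopped. A moving robot is either the leader or a follower. - The first robot is the leader. Each newly appearing robot becomes the successor of the robot that most recently left the door, and that robot becomes its predecessor $\mathrm{pred}(r)$. These relations never change. - At each step, the leader behaves as follows. If the leader has a neighboring frontier pixel, it moves to one of them (chosen arbitrarily). Otherwise it becomes stopped permanently and leadership passes to its successor. If the leader has no frontier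 neighbor and is on the door $s$, the algorithm halts. - A follower $r$ moves at time $t$ to the pixel $\mathrm{prev}(\mathrm{pred}(r),t)$ previously occupied by its predecessor. - A stopped robot never moves again. Makespan: the first time $t^*$ at which every pixel of $R$ is occupied. *)

theory Defs
  imports Main
begin

text \<open>Pixels are identified with their lower-left corners in Z^2.\<close>
type_synonym pixel = "int \<times> int"

definition adj :: "pixel \<Rightarrow> pixel \<Rightarrow> bool" where
  "adj p q \<longleftrightarrow> \<bar>fst p - fst q\<bar> + \<bar>snd p - snd q\<bar> = 1"

definition environment :: "pixel set \<Rightarrow> pixel \<Rightarrow> bool" where
  "environment R s \<longleftrightarrow> finite R \<and> s \<in> R \<and>
     (\<forall>p\<in>R. \<forall>q\<in>R. (\<lambda>a b. a \<in> R \<and> b \<in> R \<and> adj a b)\<^sup>*\<^sup>* p q)"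

text \<open>Robots are indexed 0,1,2,...
  in order of appearance at the door; hence pred(r) = r - 1.
  pos: positions at time t; prv: positions at time t-1;
  cnt: number of robots that have appeared; ldr: index of the current leader
  (robots below ldr are stopped, robots above it are followers);
  vis: pixels occupied at some time \<le> t; halted: the algorithm halted.\<close>
record cfg =
  pos :: "nat \<Rightarrow> pixel option"
  prv :: "nat \<Rightarrow> pixel option"
  cnt :: nat
  ldr :: nat
  vis :: "pixel set"
  halted :: bool

definition dflf_init :: "pixel \<Rightarrow> cfg" where
  "dflf_init s = \<lparr>pos = (\<lambda>r. if r = 0 then Some s else None), prv = (\<lambda>_. None),
     cnt = 1, ldr = 0, vis = {s}, halted = False\<rparr>"

definition frontier_nbrs :: "pixel set \<Rightarrow> cfg \<Rightarrow> pixel \<Rightarrow> pixel set" where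
  "frontier_nbrs R c q = {q' \<in> R. adj q q' \<and> q' \<notin> vis c}"

text \<open>One time step in which the leader moves to tgt (Some q') or stops (None).
  Followers r move to the pixel their predecessor occupied at the previous time;
  stopped robots stay; a new robot appears on the door one step after the door was vacated.\<close>
definition dflf_move :: "pixel \<Rightarrow> cfg \<Rightarrow> pixel option \<Rightarrow> cfg" where
  "dflf_move s c tgt =
    (let L = ldr c;
         P' = (\<lambda>r. if r = L then (case tgt of Some q \<Rightarrow> Some q | None \<Rightarrow> pos c r)
                   else if L < r \<and> r < cnt c then prv c (r - 1)
                   else pos c r);
         newr = (0 < cnt c \<and> prv c (cnt c - 1) = Some s \<and> pos c (cnt c - 1) \<noteq> Some s);
         P'' = (if newr then P'(cnt c := Some s) else P')
     in \<lparr>pos = P'', prv = pos c, cnt = (if newr then Suc (cnt c) else cnt c),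
         ldr = (if tgt = None then Suc L else L),
         vis = vis c \<union> {q. \<exists>r. P'' r = Some q}, halted = False\<rparr>)"

definition dflf_step :: "pixel set \<Rightarrow> pixel \<Rightarrow> cfg \<Rightarrow> cfg \<Rightarrow> bool" where
  "dflf_step R s c c' \<longleftrightarrow>
    (if halted c then c' = c\<lparr>prv := pos c\<rparr>
     else (let F = (case pos c (ldr c) of Some q \<Rightarrow> frontier_nbrs R c q | None \<Rightarrow> {}) in
       if F \<noteq> {} then (\<exists>q'\<in>F. c' = dflf_move s c (Some q'))
       else if pos c (ldr c) = Some s then c' = c\<lparr>prv := pos c, halted := True\<rparr>
       else c' = dflf_move s c None))"

definition dflf_run :: "pixel set \<Rightarrow> pixel \<Rightarrow> (nat \<Rightarrow> cfg) \<Rightarrow> bool" where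
  "dflf_run R s c \<longleftrightarrow> c 0 = dflf_init s \<and> (\<forall>t. dflf_step R s (c t) (c (Suc t)))"

definition filled :: "pixel set \<Rightarrow> cfg \<Rightarrow> bool" where
  "filled R c \<longleftrightarrow> (\<forall>q\<in>R. \<exists>r. pos c r = Some q)"

definition moves :: "(nat \<Rightarrow> cfg) \<Rightarrow> nat \<Rightarrow> nat \<Rightarrow> nat" where
  "moves c r T = card {t. t < T \<and> pos (c t) r \<noteq> None \<and> pos (c (Suc t)) r \<noteq> None
                            \<and> pos (c t) r \<noteq> pos (c (Suc t)) r}"

end

theory Submission imports Defs begin

definition Inv :: "pixel set \<Rightarrow> (nat \<Rightarrow> cfg) \<Rightarrow> nat \<Rightarrow> bool" where
 "Inv R c t \<longleftrightarrow> (\<forall>r. pos (c t) r \<noteq> None \<longleftrightarrow> r < cnt (c t)) \<and>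
   (\<forall>r q. pos (c t) r = Some q \<longrightarrow> q \<in> R \<and> q \<in> vis (c t)) \<and>
   (\<forall>r. ldr (c t) \<le> r \<longrightarrow> r < cnt (c t) \<longrightarrow> prv (c t) r \<noteq> pos (c t) r) \<and>
   (\<forall>i j t1 t2 q. i < j \<longrightarrow> t1 \<le> t \<longrightarrow> t2 \<le> t \<longrightarrow> pos (c t1) i = Some q \<longrightarrow> pos (c t2) j = Some q \<longrightarrow> t1 < t2)"

context
  fixes R s c
  assumes run: "dflf_run R s c" and sR: "s \<in> R"
begin

lemma c0: "c 0 = dflf_init s" using run by (simp add: dflf_run_def)
lemma stp: "dflf_step R s (c t) (c (Suc t))" using run by (simp add: dflf_run_def)

lemma prvS: "prv (c (Suc t)) = pos (c t)"
  using stp[of t] unfolding dflf_step_def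
  by (auto simp: Let_def dflf_move_def split: if_splits option.splits)

lemma basicS: "cnt (c t) \<le> cnt (c (Suc t)) \<and> cnt (c (Suc t)) \<le> Suc (cnt (c t)) \<and>
   ldr (c t) \<le> ldr (c (Suc t)) \<and> vis (c t) \<subseteq> vis (c (Suc t))"
  using stp[of t] unfolding dflf_step_def
  by (auto simp: Let_def dflf_move_def split: if_splits option.splits)

lemma nh_prev: "\<not> halted (c (Suc t)) \<Longrightarrow> \<not> halted (c t)"
  using stp[of t] unfolding dflf_step_def
  by (auto simp: Let_def dflf_move_def split: if_splits option.splits)

lemma halt_pos: "halted (c (Suc t)) \<Longrightarrow> pos (c (Suc t)) = pos (c t)"
  using stp[of t] unfolding dflf_step_def
  by (auto simp: Let_def dflf_move_def split: if_splits option.splits)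

lemma halt_keep: "halted (c t) \<Longrightarrow> halted (c (Suc t))"
  using stp[of t] unfolding dflf_step_def by auto

lemma step_move: "\<not> halted (c (Suc t)) \<Longrightarrow> \<exists>tgt. c (Suc t) = dflf_move s (c t) tgt \<and>
   (\<forall>q. tgt = Some q \<longrightarrow> q \<in> R \<and> q \<notin> vis (c t)) \<and> (tgt \<noteq> None \<longrightarrow> pos (c t) (ldr (c t)) \<noteq> None)"
  using stp[of t] unfolding dflf_step_def
  apply (cases "halted (c t)")
   apply simp
  apply (auto simp: Let_def frontier_nbrs_def split: if_splits option.splits)
  done


lemma mono_le: "u \<le> t \<Longrightarrow> cnt (c u) \<le> cnt (c t) \<and> ldr (c u) \<le> ldr (c t) \<and> vis (c u) \<subseteq> vis (c t)"
proof (induction t)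
  case 0 then show ?case by simp
next
  case (Suc t)
  then show ?case using basicS[of t] by (cases "u = Suc t") (auto simp: le_Suc_eq)
qed

lemma init: "pos (c 0) = (\<lambda>r. if r = 0 then Some s else None)" "prv (c 0) = (\<lambda>_. None)"
  "cnt (c 0) = 1" "ldr (c 0) = 0" "vis (c 0) = {s}" "halted (c 0) = False"
  using c0 by (auto simp: dflf_init_def)

lemma cnt_pos: "0 < cnt (c t)"
  using mono_le[of 0 t] init by auto

lemma moveD:
  assumes "c (Suc t) = dflf_move s (c t) tgt"
  defines "N \<equiv> 0 < cnt (c t) \<and> prv (c t) (cnt (c t) - 1) = Some s \<and> pos (c t) (cnt (c t) - 1) \<noteq> Some s"
  shows "pos (c (Suc t)) r = (if N \<and> r = cnt (c t) then Some s else if r = ldr (c t) then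
           (case tgt of Some q \<Rightarrow> Some q | None \<Rightarrow> pos (c t) r)
           else if ldr (c t) < r \<and> r < cnt (c t) then prv (c t) (r - 1) else pos (c t) r)"
   "cnt (c (Suc t)) = (if N then Suc (cnt (c t)) else cnt (c t))"
   "ldr (c (Suc t)) = (if tgt = None then Suc (ldr (c t)) else ldr (c t))"
   "vis (c (Suc t)) = vis (c t) \<union> {q. \<exists>r. pos (c (Suc t)) r = Some q}"
  using assms by (auto simp: dflf_move_def Let_def)

lemma fol:
  assumes nh: "\<not> halted (c t)" and lj: "ldr (c t) < j" and jn: "j < cnt (c t)"
  shows "\<exists>t0. t = Suc (Suc t0) \<and> 0 < j \<and> ((pos (c t) j = pos (c t0) (j-1) \<and> j < cnt (c (Suc t0))) \<or>
     (pos (c t) j = Some s \<and> pos (c t0) (j-1) = Some s \<and> pos (c (Suc t0)) (j-1) \<noteq> Some s \<and> j = cnt (c (Suc t0))))"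
proof -
  have "t \<noteq> 0"
  proof
    assume "t = 0" then show False using lj jn init by simp
  qed
  then obtain t1 where t1: "t = Suc t1" by (cases t) auto
  obtain tgt where tg: "c (Suc t1) = dflf_move s (c t1) tgt" using step_move[of t1] nh t1 by auto
  note M = moveD[OF tg]
  have ll: "ldr (c t1) \<le> ldr (c t)" using basicS[of t1] t1 by simp
  show ?thesis
  proof (cases "0 < cnt (c t1) \<and> prv (c t1) (cnt (c t1) - 1) = Some s \<and> pos (c t1) (cnt (c t1) - 1) \<noteq> Some s \<and> j = cnt (c t1)")
    case True
    have "t1 \<noteq> 0"
    proof
      assume "t1 = 0" then show False using True init by simp
    qed
    then obtain t0 where t0: "t1 = Suc t0" by (cases t1) auto
    show ?thesis using True M(1)[of j] t1 t0 prvS[of t0] by auto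
  next
    case False
    have jc: "j < cnt (c t1)" using False M(2) jn t1 by (auto split: if_splits)
    have p: "pos (c t) j = prv (c t1) (j - 1)" using False M(1)[of j] ll lj jc t1 by auto
    have "t1 \<noteq> 0"
    proof
      assume "t1 = 0" then show False using jc lj init ll t1 by simp
    qed
    then obtain t0 where t0: "t1 = Suc t0" by (cases t1) auto
    show ?thesis using p t0 t1 prvS[of t0] jc lj by auto
  qed
qed


lemma inv0: "Inv R c 0"
  unfolding Inv_def using init sR by auto

lemma inv_step:
  assumes nh: "\<not> halted (c (Suc t))" and IH: "\<And>u. u \<le> t \<Longrightarrow> Inv R c u"
  shows "Inv R c (Suc t)"
proof -
  obtain tgt where tg: "c (Suc t) = dflf_move s (c t) tgt"
    and tq: "\<And>q. tgt = Some q \<Longrightarrow> q \<in> R \<and> q \<notin> vis (c t)"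
    and tl: "tgt \<noteq> None \<Longrightarrow> pos (c t) (ldr (c t)) \<noteq> None"
    using step_move[OF nh] by blast
  have nh0: "\<not> halted (c t)" using nh_prev[OF nh] .
  define L where "L = ldr (c t)"
  define n where "n = cnt (c t)"
  define N where "N \<longleftrightarrow> 0 < n \<and> prv (c t) (n - 1) = Some s \<and> pos (c t) (n - 1) \<noteq> Some s"
  note M = moveD[OF tg]
  have P: "\<And>r. pos (c (Suc t)) r = (if N \<and> r = n then Some s else if r = L then
           (case tgt of Some q \<Rightarrow> Some q | None \<Rightarrow> pos (c t) r)
           else if L < r \<and> r < n then prv (c t) (r - 1) else pos (c t) r)"
    using M(1) by (simp add: N_def L_def n_def)
  have C: "cnt (c (Suc t)) = (if N then Suc n else n)" using M(2) by (simp add: N_def n_def)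
  have Ld: "ldr (c (Suc t)) = (if tgt = None then Suc L else L)" using M(3) by (simp add: L_def)
  have V: "vis (c (Suc t)) = vis (c t) \<union> {q. \<exists>r. pos (c (Suc t)) r = Some q}" using M(4) .
  have pr: "prv (c (Suc t)) = pos (c t)" by (rule prvS)
  have none_u: "\<And>u r. u \<le> t \<Longrightarrow> pos (c u) r \<noteq> None \<longleftrightarrow> r < cnt (c u)"
    using IH unfolding Inv_def by blast
  have R_u: "\<And>u r q. u \<le> t \<Longrightarrow> pos (c u) r = Some q \<Longrightarrow> q \<in> R"
    using IH unfolding Inv_def by blast
  have vis_u: "\<And>u r q. u \<le> t \<Longrightarrow> pos (c u) r = Some q \<Longrightarrow> q \<in> vis (c t)"
  proof -
    fix u r q assume "u \<le> t" "pos (c u) r = Some q"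
    then have "q \<in> vis (c u)" using IH unfolding Inv_def by blast
    then show "q \<in> vis (c t)" using mono_le[OF \<open>u \<le> t\<close>] by blast
  qed
  have A_u: "\<And>u r. u \<le> t \<Longrightarrow> ldr (c u) \<le> r \<Longrightarrow> r < cnt (c u) \<Longrightarrow> prv (c u) r \<noteq> pos (c u) r"
    using IH unfolding Inv_def by blast
  have I4: "\<And>i j t1 t2 q. i < j \<Longrightarrow> t1 \<le> t \<Longrightarrow> t2 \<le> t \<Longrightarrow> pos (c t1) i = Some q \<Longrightarrow> pos (c t2) j = Some q \<Longrightarrow> t1 < t2"
    using IH[of t] unfolding Inv_def by blast
  have I1: "\<And>r. pos (c t) r \<noteq> None \<longleftrightarrow> r < n" using none_u[of t] n_def by simp
  have sv: "s \<in> vis (c t)" using mono_le[of 0 t] init by auto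
  have folw: "\<And>r. L < r \<Longrightarrow> r < n \<Longrightarrow> \<exists>t1. t = Suc t1 \<and> prv (c t) (r - 1) = pos (c t1) (r - 1) \<and> r - 1 < cnt (c t1) \<and> 0 < r"
  proof -
    fix r assume a: "L < r" "r < n"
    have "t \<noteq> 0"
    proof
      assume "t = 0" then show False using a init L_def n_def by simp
    qed
    then obtain t1 where t1: "t = Suc t1" by (cases t) auto
    have "n \<le> Suc (cnt (c t1))" using basicS[of t1] t1 n_def by simp
    then show "\<exists>t1. t = Suc t1 \<and> prv (c t) (r - 1) = pos (c t1) (r - 1) \<and> r - 1 < cnt (c t1) \<and> 0 < r"
      using a t1 prvS[of t1] by auto
  qed
  have kinds: "\<And>r. (N \<and> r = n \<and> pos (c (Suc t)) r = Some s) \<or>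
      (r = L \<and> \<not> (N \<and> r = n) \<and> (\<exists>q. tgt = Some q \<and> pos (c (Suc t)) r = Some q)) \<or>
      (pos (c (Suc t)) r = pos (c t) r \<and> \<not> (N \<and> r = n) \<and> \<not> (L < r \<and> r < n) \<and> (r = L \<longrightarrow> tgt = None)) \<or>
      (L < r \<and> r < n \<and> \<not> (N \<and> r = n) \<and> pos (c (Suc t)) r = prv (c t) (r - 1))"
    using P by (auto split: option.splits)
  have ii: "\<And>i j q u. i < j \<Longrightarrow> pos (c (Suc t)) i = Some q \<Longrightarrow> u \<le> t \<Longrightarrow> pos (c u) j = Some q \<Longrightarrow> False"
  proof -
    fix i j q u assume a: "i < j" "pos (c (Suc t)) i = Some q" "u \<le> t" "pos (c u) j = Some q"
    have ju: "j < cnt (c u)" using none_u[OF a(3), of j] a(4) by simp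
    have "cnt (c u) \<le> n" using mono_le[OF a(3)] n_def by simp
    then have jn: "j < n" using ju by simp
    show False
      using kinds[of i]
    proof (elim disjE conjE exE)
      assume "N" "i = n" then show False using a jn by simp
    next
      fix q' assume "tgt = Some q'" "pos (c (Suc t)) i = Some q'"
      then show False using tq[of q'] vis_u[OF a(3) a(4)] a(2) by simp
    next
      assume "pos (c (Suc t)) i = pos (c t) i"
      then have "pos (c t) i = Some q" using a(2) by simp
      then have "t < u" using I4[OF a(1) order.refl a(3) _ a(4)] by blast
      then show False using a(3) by simp
    next
      assume f: "L < i" "i < n" "pos (c (Suc t)) i = prv (c t) (i - 1)"
      obtain t1 where t1: "t = Suc t1" "prv (c t) (i - 1) = pos (c t1) (i - 1)" "0 < i"
        using folw[OF f(1,2)] by blast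
      have pi: "pos (c t1) (i - 1) = Some q" using t1 f a by simp
      have "t1 < u" using I4[of "i - 1" j t1 u q] pi a t1 by simp
      then have ut: "u = t" using a(3) t1 by simp
      obtain t0 where t0: "t = Suc (Suc t0)" and alt: "(pos (c t) j = pos (c t0) (j-1)) \<or>
          (pos (c t) j = Some s \<and> pos (c t0) (j-1) = Some s)"
        using fol[OF nh0, of j] f(1) a(1) jn L_def n_def by auto
      have "pos (c t0) (j - 1) = Some q" using alt a(4) ut by auto
      moreover have "i - 1 < j - 1" using t1(3) a(1) by simp
      ultimately have "Suc t0 < t0" using I4[of "i - 1" "j - 1" "Suc t0" t0 q] pi t0 t1 by simp
      then show False by simp
    qed
  qed
  have D: "\<And>i j q. i < j \<Longrightarrow> pos (c (Suc t)) i = Some q \<Longrightarrow> pos (c (Suc t)) j = Some q \<Longrightarrow> False"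
  proof -
    fix i j q assume a: "i < j" "pos (c (Suc t)) i = Some q" "pos (c (Suc t)) j = Some q"
    show False
      using kinds[of j]
    proof (elim disjE conjE exE)
      assume N: "N" and jn: "j = n" and "pos (c (Suc t)) j = Some s"
      then have qs: "q = s" using a by simp
      have n0: "0 < n" and pv: "prv (c t) (n - 1) = Some s" and pn: "pos (c t) (n - 1) \<noteq> Some s"
        using N N_def by auto
      have "t \<noteq> 0"
      proof
        assume "t = 0" then show False using pv init by simp
      qed
      then obtain t1 where t1: "t = Suc t1" by (cases t) auto
      have p1: "pos (c t1) (n - 1) = Some s" using pv prvS[of t1] t1 by simp
      show False
      proof (cases "i < n - 1")
        case True
        then show False using ii[OF True, of q t1] a(2) qs p1 t1 by simp
      next
        case False
        then have ie: "i = n - 1" using a(1) jn by simp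
        show False
          using kinds[of i]
        proof (elim disjE conjE exE)
          assume "i = n" then show False using ie n0 by simp
        next
          fix q' assume "tgt = Some q'" "pos (c (Suc t)) i = Some q'"
          then show False using tq[of q'] a(2) qs sv by simp
        next
          assume "pos (c (Suc t)) i = pos (c t) i"
          then show False using a(2) qs pn ie by simp
        next
          assume f: "L < i" "i < n" "pos (c (Suc t)) i = prv (c t) (i - 1)"
          then have "0 < i" by simp
          have "pos (c t1) (i - 1) = Some s" using f a(2) qs prvS[of t1] t1 by simp
          moreover have lt: "i - 1 < i" using \<open>0 < i\<close> by simp
          moreover have "pos (c t1) i = Some s" using p1 ie by simp
          ultimately have "t1 < t1" using I4[OF lt, of t1 t1 s] t1 by simp
          then show False by simp
        qed
      qed
    next
      fix q' assume jl: "j = L" and tq': "tgt = Some q'" and pj: "pos (c (Suc t)) j = Some q'"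
      have qq: "q' = q" using pj a(3) by simp
      show False
        using kinds[of i]
      proof (elim disjE conjE exE)
        assume "N" "i = n" then show False using a(2) tq[of q'] tq' qq sv P[of i] by simp
      next
        assume "i = L" then show False using jl a(1) by simp
      next
        assume "pos (c (Suc t)) i = pos (c t) i"
        then show False using a(2) vis_u[of t i q] tq[of q'] tq' qq by simp
      next
        assume "L < i" then show False using jl a(1) by simp
      qed
    next
      assume "pos (c (Suc t)) j = pos (c t) j"
      then show False using ii[OF a(1) a(2) order.refl] a(3) by simp
    next
      assume f: "L < j" "j < n" "pos (c (Suc t)) j = prv (c t) (j - 1)"
      obtain t1 where t1: "t = Suc t1" "prv (c t) (j - 1) = pos (c t1) (j - 1)" "0 < j"
        using folw[OF f(1,2)] by blast
      have pj: "pos (c t1) (j - 1) = Some q" using f t1 a(3) by simp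
      show False
        using kinds[of i]
      proof (elim disjE conjE exE)
        assume "N" "i = n" then show False using a(1) f by simp
      next
        fix q' assume "tgt = Some q'" "pos (c (Suc t)) i = Some q'"
        then show False using tq[of q'] a(2) vis_u[of t1 "j - 1" q] pj t1 by simp
      next
        assume st: "pos (c (Suc t)) i = pos (c t) i"
        then have pi: "pos (c t) i = Some q" using a(2) by simp
        show False
        proof (cases "i < j - 1")
          case True
          then have "t < t1" using I4[OF True order.refl _ pi pj] t1 by simp
          then show False using t1 by simp
        next
          case False
          then have ie: "i = j - 1" using a(1) by simp
          have "prv (c t) (j - 1) \<noteq> pos (c t) (j - 1)"
            using A_u[of t "j - 1"] f L_def n_def by simp
          then show False using t1 pj pi ie by simp
        qed
      next
        assume g: "L < i" "i < n" "pos (c (Suc t)) i = prv (c t) (i - 1)"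
        then have "0 < i" by simp
        have "pos (c t1) (i - 1) = Some q" using g a(2) prvS[of t1] t1 by simp
        moreover have "i - 1 < j - 1" using \<open>0 < i\<close> a(1) by simp
        ultimately have "t1 < t1" using I4[of "i - 1" "j - 1" t1 t1 q] pj t1 by simp
        then show False by simp
      qed
    qed
  qed
  have none: "\<And>r. pos (c (Suc t)) r \<noteq> None \<longleftrightarrow> r < cnt (c (Suc t))"
  proof -
    fix r
    show "pos (c (Suc t)) r \<noteq> None \<longleftrightarrow> r < cnt (c (Suc t))"
      using kinds[of r]
    proof (elim disjE conjE exE)
      assume "N" "r = n" "pos (c (Suc t)) r = Some s" then show ?thesis using C by simp
    next
      fix q assume "r = L" "\<not> (N \<and> r = n)" "tgt = Some q" "pos (c (Suc t)) r = Some q"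
      then show ?thesis using tl I1[of L] C L_def by auto
    next
      assume "pos (c (Suc t)) r = pos (c t) r" "\<not> (N \<and> r = n)"
      then show ?thesis using I1[of r] C by auto
    next
      assume f: "L < r" "r < n" "pos (c (Suc t)) r = prv (c t) (r - 1)"
      obtain t1 where t1: "t = Suc t1" "prv (c t) (r - 1) = pos (c t1) (r - 1)" "r - 1 < cnt (c t1)"
        using folw[OF f(1,2)] by blast
      have "pos (c t1) (r - 1) \<noteq> None" using none_u[of t1 "r - 1"] t1 by simp
      then show ?thesis using f t1 C by auto
    qed
  qed
  have Rv: "\<And>r q. pos (c (Suc t)) r = Some q \<Longrightarrow> q \<in> R \<and> q \<in> vis (c (Suc t))"
  proof -
    fix r q assume a: "pos (c (Suc t)) r = Some q"
    have "q \<in> R"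
      using kinds[of r]
    proof (elim disjE conjE exE)
      assume "N" "r = n" "pos (c (Suc t)) r = Some s" then show ?thesis using a sR by simp
    next
      fix q' assume "tgt = Some q'" "pos (c (Suc t)) r = Some q'"
      then show ?thesis using a tq[of q'] by simp
    next
      assume "pos (c (Suc t)) r = pos (c t) r"
      then show ?thesis using a R_u[of t r q] by simp
    next
      assume f: "L < r" "r < n" "pos (c (Suc t)) r = prv (c t) (r - 1)"
      obtain t1 where t1: "t = Suc t1" "prv (c t) (r - 1) = pos (c t1) (r - 1)"
        using folw[OF f(1,2)] by blast
      then show ?thesis using a f R_u[of t1 "r - 1" q] by simp
    qed
    moreover have "q \<in> vis (c (Suc t))" using a V by blast
    ultimately show "q \<in> R \<and> q \<in> vis (c (Suc t))" by simp
  qed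
  have A: "\<And>r. ldr (c (Suc t)) \<le> r \<Longrightarrow> r < cnt (c (Suc t)) \<Longrightarrow> prv (c (Suc t)) r \<noteq> pos (c (Suc t)) r"
  proof -
    fix r assume a: "ldr (c (Suc t)) \<le> r" "r < cnt (c (Suc t))"
    show "prv (c (Suc t)) r \<noteq> pos (c (Suc t)) r"
      using kinds[of r]
    proof (elim disjE conjE exE)
      assume "N" "r = n" "pos (c (Suc t)) r = Some s" then show ?thesis using I1[of n] pr by (metis less_irrefl option.distinct(1))
    next
      fix q assume "r = L" "tgt = Some q" "pos (c (Suc t)) r = Some q"
      then show ?thesis using vis_u[of t r q] tq[of q] pr by auto
    next
      assume "pos (c (Suc t)) r = pos (c t) r" "\<not> (N \<and> r = n)" "\<not> (L < r \<and> r < n)" "r = L \<longrightarrow> tgt = None"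
      then show ?thesis using a C Ld pr by (auto split: if_splits)
    next
      assume f: "L < r" "r < n" "pos (c (Suc t)) r = prv (c t) (r - 1)"
      obtain t0 where t0: "t = Suc (Suc t0)" "0 < r" and alt: "(pos (c t) r = pos (c t0) (r-1) \<and> r < cnt (c (Suc t0))) \<or>
          (pos (c t) r = Some s \<and> pos (c (Suc t0)) (r-1) \<noteq> Some s)"
        using fol[OF nh0, of r] f L_def n_def by auto
      have pv: "prv (c t) (r - 1) = pos (c (Suc t0)) (r - 1)" using prvS[of "Suc t0"] t0 by simp
      show ?thesis
        using alt
      proof (elim disjE conjE)
        assume e: "pos (c t) r = pos (c t0) (r - 1)" "r < cnt (c (Suc t0))"
        have "ldr (c (Suc t0)) \<le> L" using mono_le[of "Suc t0" t] t0 L_def by simp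
        then have "prv (c (Suc t0)) (r - 1) \<noteq> pos (c (Suc t0)) (r - 1)"
          using A_u[of "Suc t0" "r - 1"] t0 f e by simp
        then show ?thesis using e f pv prvS[of t0] pr by simp
      next
        assume "pos (c t) r = Some s" "pos (c (Suc t0)) (r - 1) \<noteq> Some s"
        then show ?thesis using f pv pr by simp
      qed
    qed
  qed
  have ORD: "\<And>i j t1 t2 q. i < j \<Longrightarrow> t1 \<le> Suc t \<Longrightarrow> t2 \<le> Suc t \<Longrightarrow> pos (c t1) i = Some q \<Longrightarrow> pos (c t2) j = Some q \<Longrightarrow> t1 < t2"
  proof -
    fix i j t1 t2 q assume a: "i < j" "t1 \<le> Suc t" "t2 \<le> Suc t" "pos (c t1) i = Some q" "pos (c t2) j = Some q"
    show "t1 < t2"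
    proof (cases "t1 = Suc t")
      case True
      show ?thesis
      proof (cases "t2 = Suc t")
        case True2: True
        then show ?thesis using D[OF a(1)] a True by simp
      next
        case False
        then show ?thesis using ii[OF a(1), of q t2] a True by simp
      qed
    next
      case False
      then show ?thesis using I4[OF a(1), of t1 t2 q] a by (cases "t2 = Suc t") auto
    qed
  qed
  have c1: "\<forall>r. pos (c (Suc t)) r \<noteq> None \<longleftrightarrow> r < cnt (c (Suc t))"
    by (intro allI) (rule none)
  have c2: "\<forall>r q. pos (c (Suc t)) r = Some q \<longrightarrow> q \<in> R \<and> q \<in> vis (c (Suc t))"
    by (intro allI impI) (rule Rv)
  have c3: "\<forall>r. ldr (c (Suc t)) \<le> r \<longrightarrow> r < cnt (c (Suc t)) \<longrightarrow> prv (c (Suc t)) r \<noteq> pos (c (Suc t)) r"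
    by (intro allI impI) (rule A)
  have c4: "\<forall>i j t1 t2 q. i < j \<longrightarrow> t1 \<le> Suc t \<longrightarrow> t2 \<le> Suc t \<longrightarrow> pos (c t1) i = Some q \<longrightarrow> pos (c t2) j = Some q \<longrightarrow> t1 < t2"
    apply (intro allI impI)
    apply (rule ORD)
        apply assumption+
    done
  show ?thesis unfolding Inv_def using c1 c2 c3 c4 by (intro conjI)
qed


lemma nh_le: "u \<le> t \<Longrightarrow> \<not> halted (c t) \<Longrightarrow> \<not> halted (c u)"
proof (induction t)
  case 0 then show ?case by simp
next
  case (Suc t)
  show ?case
  proof (cases "u = Suc t")
    case True then show ?thesis using Suc.prems by simp
  next
    case False
    then have "u \<le> t" using Suc.prems(1) by simp
    moreover have "\<not> halted (c t)" using nh_prev[OF Suc.prems(2)] .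
    ultimately show ?thesis using Suc.IH by blast
  qed
qed

lemma inv_all: "\<not> halted (c t) \<Longrightarrow> Inv R c t"
proof (induction t rule: less_induct)
  case (less t)
  show ?case
  proof (cases t)
    case 0 then show ?thesis using inv0 by simp
  next
    case (Suc t')
    have "\<And>u. u \<le> t' \<Longrightarrow> \<not> halted (c u)"
      using nh_le[OF _ less.prems] Suc le_SucI by blast
    then have "\<And>u. u \<le> t' \<Longrightarrow> Inv R c u" using less.IH Suc by simp
    then show ?thesis using inv_step less.prems Suc by simp
  qed
qed

lemma new_pix:
  assumes nh: "\<not> halted (c (Suc t))" and mv: "pos (c t) r \<noteq> pos (c (Suc t)) r"
    and a: "pos (c (Suc t)) r = Some q" and u: "u \<le> t" and b: "pos (c u) r = Some q"
  shows False
proof -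
  obtain tgt where tg: "c (Suc t) = dflf_move s (c t) tgt"
    and tq: "\<And>q. tgt = Some q \<Longrightarrow> q \<in> R \<and> q \<notin> vis (c t)"
    using step_move[OF nh] by blast
  have nh0: "\<not> halted (c t)" using nh_prev[OF nh] .
  have Iu: "Inv R c t" using inv_all[OF nh0] .
  have nu: "\<not> halted (c u)" using nh_le[OF u nh0] .
  have Iuu: "Inv R c u" using inv_all[OF nu] .
  have ru: "r < cnt (c u)" using Iuu b unfolding Inv_def by (metis option.distinct(1))
  have mu: "cnt (c u) \<le> cnt (c t) \<and> vis (c u) \<subseteq> vis (c t)" using mono_le[OF u] by simp
  have qv: "q \<in> vis (c t)" using Iuu b mu unfolding Inv_def by blast
  note P = moveD(1)[OF tg, of r]
  show False
  proof (cases "r = cnt (c t)")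
    case True then show False using ru mu by simp
  next
    case nn: False
    show False
    proof (cases "r = ldr (c t)")
      case True
      then show False using P nn mv a tq qv by (cases tgt) auto
    next
      case nl: False
      show False
      proof (cases "ldr (c t) < r \<and> r < cnt (c t)")
        case False then show False using P nn nl mv by (auto split: if_splits)
      next
        case True
        have "t \<noteq> 0"
        proof
          assume t0: "t = 0"
          have "ldr (c t) = 0" "cnt (c t) = 1" using init t0 by simp_all
          then show False using True by simp
        qed
        then obtain t1 where t1: "t = Suc t1" by (cases t) auto
        have "pos (c t1) (r - 1) = Some q" using P nn nl True a prvS[of t1] t1 by simp
        moreover have "r - 1 < r" using True by simp
        moreover have ord: "\<And>i j t1 t2 q. i < j \<Longrightarrow> t1 \<le> t \<Longrightarrow> t2 \<le> t \<Longrightarrow> pos (c t1) i = Some q \<Longrightarrow> pos (c t2) j = Some q \<Longrightarrow> t1 < t2"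
          using Iu unfolding Inv_def by blast
        ultimately have "t1 < u" using b u t1 by simp
        then have "u = t" using u t1 by simp
        then show False using a b mv by simp
      qed
    qed
  qed
qed

lemma halt_back: "halted (c u) \<Longrightarrow> \<exists>h<u. pos (c h) = pos (c u)"
proof (induction u)
  case 0 then show ?case using init by simp
next
  case (Suc u)
  show ?case
  proof (cases "halted (c u)")
    case True
    then obtain h where "h < u" "pos (c h) = pos (c u)" using Suc.IH by blast
    moreover have "pos (c (Suc u)) = pos (c u)" using halt_pos[OF Suc.prems] .
    ultimately show ?thesis by (intro exI[of _ h]) simp
  next
    case False
    show ?thesis by (intro exI[of _ u]) (simp add: halt_pos[OF Suc.prems])
  qed
qed

end

theorem mainTheorem4:
  assumes "environment R s"
    and "dflf_run R s c"
    and "filled R (c T)"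
    and "\<forall>t<T. \<not> filled R (c t)"
  shows "(\<forall>r. moves c r T \<le> card R) \<and> (\<Sum>r<cnt (c T). moves c r T) \<le> card R ^ 2"
proof -
  have fin: "finite R" and sR: "s \<in> R" using assms(1) unfolding environment_def by auto
  note run = assms(2)
  have nhT: "\<not> halted (c T)"
  proof
    assume "halted (c T)"
    then obtain h where "h < T" "pos (c h) = pos (c T)" using halt_back[OF run sR] by blast
    moreover from this(1) obtain q where q: "q \<in> R" "\<forall>r. pos (c h) r \<noteq> Some q"
      using assms(4) unfolding filled_def by blast
    moreover obtain r where "pos (c T) r = Some q" using assms(3) q(1) unfolding filled_def by blast
    ultimately show False by simp
  qed
  have nht: "\<And>t. t \<le> T \<Longrightarrow> \<not> halted (c t)"
  proof -
    fix t assume "t \<le> T"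
    then show "\<not> halted (c t)" using nhT nh_le[OF run sR] by blast
  qed
  have inv: "\<And>t. t \<le> T \<Longrightarrow> Inv R c t" using inv_all[OF run sR] nht by blast
  have mv: "\<And>r. moves c r T \<le> card R"
  proof -
    fix r
    define S where "S = {t. t < T \<and> pos (c t) r \<noteq> None \<and> pos (c (Suc t)) r \<noteq> None
                            \<and> pos (c t) r \<noteq> pos (c (Suc t)) r}"
    define f where "f t = the (pos (c (Suc t)) r)" for t
    have fS: "\<And>t. t \<in> S \<Longrightarrow> pos (c (Suc t)) r = Some (f t)" unfolding S_def f_def by auto
    have img: "f ` S \<subseteq> R"
    proof
      fix q assume "q \<in> f ` S"
      then obtain t where t: "t \<in> S" "q = f t" by blast
      then have "Suc t \<le> T" unfolding S_def by simp
      then show "q \<in> R" using inv[of "Suc t"] fS[OF t(1)] t(2) unfolding Inv_def by blast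
    qed
    have inj: "inj_on f S"
    proof (rule inj_onI)
      have key: "\<And>t1 t2. t1 \<in> S \<Longrightarrow> t2 \<in> S \<Longrightarrow> f t1 = f t2 \<Longrightarrow> t1 < t2 \<Longrightarrow> False"
      proof -
        fix t1 t2 assume a: "t1 \<in> S" "t2 \<in> S" "f t1 = f t2" "t1 < t2"
        have "Suc t2 \<le> T" using a(2) unfolding S_def by simp
        then have nh: "\<not> halted (c (Suc t2))" using nht by blast
        have m: "pos (c t2) r \<noteq> pos (c (Suc t2)) r" using a(2) unfolding S_def by simp
        show False using new_pix[OF run sR nh m fS[OF a(2)], of "Suc t1"] fS[OF a(1)] a(3,4) by simp
      qed
      fix t1 t2 assume "t1 \<in> S" "t2 \<in> S" "f t1 = f t2"
      then show "t1 = t2"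
      proof (cases t1 t2 rule: linorder_cases)
        case less then show ?thesis using key \<open>t1 \<in> S\<close> \<open>t2 \<in> S\<close> \<open>f t1 = f t2\<close> by blast
      next
        case greater then show ?thesis using key \<open>t1 \<in> S\<close> \<open>t2 \<in> S\<close> \<open>f t1 = f t2\<close> by force
      qed
    qed
    have "card S \<le> card R" using card_inj_on_le[OF inj img fin] .
    then show "moves c r T \<le> card R" unfolding moves_def S_def by simp
  qed
  have cntR: "cnt (c T) \<le> card R"
  proof -
    define g where "g r = the (pos (c T) r)" for r
    have gS: "\<And>r. r < cnt (c T) \<Longrightarrow> pos (c T) r = Some (g r)"
      using inv[of T] unfolding Inv_def g_def by auto
    have img: "g ` {..<cnt (c T)} \<subseteq> R"
      using gS inv[of T] unfolding Inv_def by blast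
    have inj: "inj_on g {..<cnt (c T)}"
    proof (rule inj_onI)
      fix i j assume a: "i \<in> {..<cnt (c T)}" "j \<in> {..<cnt (c T)}" "g i = g j"
      have o: "\<And>i j. i < j \<Longrightarrow> i < cnt (c T) \<Longrightarrow> j < cnt (c T) \<Longrightarrow> g i = g j \<Longrightarrow> False"
      proof -
        fix i j assume b: "i < j" "i < cnt (c T)" "j < cnt (c T)" "g i = g j"
        have ord: "\<And>i j t1 t2 q. i < j \<Longrightarrow> t1 \<le> T \<Longrightarrow> t2 \<le> T \<Longrightarrow> pos (c t1) i = Some q \<Longrightarrow> pos (c t2) j = Some q \<Longrightarrow> t1 < t2"
          using inv[of T] unfolding Inv_def by blast
        have "T < T" using ord[OF b(1) order.refl order.refl gS[OF b(2)]] gS[OF b(3)] b(4) by simp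
        then show False by simp
      qed
      have "i < cnt (c T)" "j < cnt (c T)" using a(1,2) by auto
      then show "i = j"
      proof (cases i j rule: linorder_cases)
        case less then show ?thesis using o[OF less] a(3) \<open>i < cnt (c T)\<close> \<open>j < cnt (c T)\<close> by blast
      next
        case greater then show ?thesis using o[OF greater] a(3) \<open>i < cnt (c T)\<close> \<open>j < cnt (c T)\<close> by force
      qed
    qed
    show ?thesis using card_inj_on_le[OF inj img fin] by simp
  qed
  have "(\<Sum>r<cnt (c T). moves c r T) \<le> card {..<cnt (c T)} * card R"
    using sum_bounded_above[of "{..<cnt (c T)}" "\<lambda>r. moves c r T" "card R"] mv by simp
  also have "\<dots> \<le> card R * card R" using cntR by simp
  finally show ?thesis using mv by (simp add: power2_eq_square)
qed

end
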